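(* Let $(L,\preceq)$ be a lattice and $\delta$ a local congruence on $L$. If two equivalence classes $[x]_\delta,[y]_\delta\in L/\delta$ satisfy $[x]_\delta\preceq_\delta[y]_\delta$ and $[y]_\delta\preceq_\delta[x]_\delta$ with $x_1\preceq y_1$ and $y_2\preceq x_2$ for some $x_1,x_2\in[x]_\delta$ and $y_1,y_2\in[y]_\delta$, then $[x]_\delta=[y]_\delta$.
   Context: For an equivalence relation $\delta$ on $L$, $[a]_\delta$ is the class of $a$ and $L/\delta$ the set of classes. A local congruence on a lattice $(L,\preceq)$ is an equivalence relation each of whose classes is a sublattice of $L$ and is convex (if $u,v$ are in the class and $u\preceq w\preceq v$, then $w$ is in the class). A $\delta$-sequence from $p_0$ to $p_n$ is a finite sequence $(p_0,p_1,\dots,p_n)$ of elements of $L$ with $n\ge1$ such that for each $i\in\{1,\dots,n\}$ either $(p_{i-1},p_i)\in\delta$ or $p_{i-1}\preceq p_i$. The relation $\preceq_\delta$ on $L/\delta$ is defined by $[x]_\delta\preceq_\delta[y]_\delta$ iff there exists a $\delta$-sequence from some $x'\in[x]_\delta$ to some $y'\in[y]_\delta$. *)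

theory Defs
  imports Main
begin

definition local_congruence :: "('a::lattice) rel \<Rightarrow> bool" where
  "local_congruence \<delta> \<longleftrightarrow>
     equiv UNIV \<delta>
     \<and> (\<forall>a. \<forall>u\<in>\<delta> `` {a}. \<forall>v\<in>\<delta> `` {a}. inf u v \<in> \<delta> `` {a} \<and> sup u v \<in> \<delta> `` {a})
     \<and> (\<forall>a u v w. u \<in> \<delta> `` {a} \<and> v \<in> \<delta> `` {a} \<and> u \<le> w \<and> w \<le> v \<longrightarrow> w \<in> \<delta> `` {a})"

text \<open>A delta-sequence (p_0,...,p_n), n \<ge> 1, represented as a list of length n+1.\<close>
definition delta_seq :: "('a::order) rel \<Rightarrow> 'a list \<Rightarrow> bool" where
  "delta_seq \<delta> ps \<longleftrightarrow> 2 \<le> length ps \<and>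
     (\<forall>i. 1 \<le> i \<and> i < length ps \<longrightarrow> (ps ! (i - 1), ps ! i) \<in> \<delta> \<or> ps ! (i - 1) \<le> ps ! i)"

definition class_le :: "('a::order) rel \<Rightarrow> 'a set \<Rightarrow> 'a set \<Rightarrow> bool" where
  "class_le \<delta> X Y \<longleftrightarrow>
     (\<exists>x'\<in>X. \<exists>y'\<in>Y. \<exists>ps. delta_seq \<delta> ps \<and> hd ps = x' \<and> last ps = y')"

end

theory Submission
  imports Defs
begin

theorem corollary4p6:
  fixes \<delta> :: "('a::lattice) rel" and x y x1 x2 y1 y2 :: 'a
  assumes "local_congruence \<delta>"
    and "class_le \<delta> (\<delta> `` {x}) (\<delta> `` {y})"
    and "class_le \<delta> (\<delta> `` {y}) (\<delta> `` {x})"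
    and "x1 \<in> \<delta> `` {x}" and "x2 \<in> \<delta> `` {x}"
    and "y1 \<in> \<delta> `` {y}" and "y2 \<in> \<delta> `` {y}"
    and "x1 \<le> y1" and "y2 \<le> x2"
  shows "\<delta> `` {x} = \<delta> `` {y}"
proof -
  have eq: "equiv UNIV \<delta>"
    and sl: "\<And>a u v. u \<in> \<delta> `` {a} \<Longrightarrow> v \<in> \<delta> `` {a} \<Longrightarrow> inf u v \<in> \<delta> `` {a} \<and> sup u v \<in> \<delta> `` {a}"
    and cv: "\<And>a u v w. u \<in> \<delta> `` {a} \<Longrightarrow> v \<in> \<delta> `` {a} \<Longrightarrow> u \<le> w \<Longrightarrow> w \<le> v \<Longrightarrow> w \<in> \<delta> `` {a}"
    using assms(1) unfolding local_congruence_def by blast+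
  define z where "z = sup x1 y2"
  have "sup x1 x2 \<in> \<delta> `` {x}" using sl assms(4,5) by blast
  moreover have "z \<le> sup x1 x2" using assms(9) unfolding z_def by (simp add: le_supI2)
  ultimately have zx: "z \<in> \<delta> `` {x}" using cv assms(4) unfolding z_def by (metis sup_ge1)
  have "sup y1 y2 \<in> \<delta> `` {y}" using sl assms(6,7) by blast
  moreover have "z \<le> sup y1 y2" using assms(8) unfolding z_def by (simp add: le_supI1)
  ultimately have zy: "z \<in> \<delta> `` {y}" using cv assms(7) unfolding z_def by (metis sup_ge2)
  have "(x, z) \<in> \<delta>" "(y, z) \<in> \<delta>" using zx zy by auto
  then have "(x, y) \<in> \<delta>" using eq by (meson equiv_def symE transE)
  then show ?thesis using equiv_class_eq[OF eq] by blast
qed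

end
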